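(* Let $p$ be a prime, $\alpha,\beta\in\overline{\mathbf F_p}$ with $\alpha\ne0$, and let $k,N$ be integers with $0\le k<N<p$. (i) There exists $\lambda\in\mathbf F_p(\alpha^N)$ such that $|\mathbf F_p((\beta+\lambda\alpha^k)^N)|\ge|\mathbf F_p(\alpha^N)|$. (ii) If $\mathbf F_p(\alpha^N)\ne\mathbf F_p(\alpha^N,\beta^N,\alpha^k\beta^{N-1})$, then there exists $\lambda\in\mathbf F_p(\alpha^N)$ such that $|\mathbf F_p((\beta+\lambda\alpha^k)^N)|>|\mathbf F_p(\alpha^N)|$.
   Context: $\overline{\mathbf F_p}$ denotes an algebraic closure of the field $\mathbf F_p$ with $p$ elements; $\mathbf F_p(\gamma)$ is the subfield generated by $\gamma$. *)

theory Defs
  imports "HOL-Computational_Algebra.Polynomial"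
begin

definition is_subfield :: "'a::field set \<Rightarrow> bool" where
  "is_subfield K \<longleftrightarrow> 0 \<in> K \<and> 1 \<in> K \<and>
     (\<forall>x\<in>K. \<forall>y\<in>K. x + y \<in> K \<and> x * y \<in> K) \<and>
     (\<forall>x\<in>K. - x \<in> K \<and> inverse x \<in> K)"

(* The subfield generated by S (over the prime field): the smallest subfield containing S.
   In characteristic p this is F_p(S). *)
definition gen_field :: "'a::field set \<Rightarrow> 'a set" where
  "gen_field S = \<Inter>{K. is_subfield K \<and> S \<subseteq> K}"

definition algebraic_over_prime_field :: "'a::field \<Rightarrow> bool" where
  "algebraic_over_prime_field x \<longleftrightarrow>
     (\<exists>q::'a poly. q \<noteq> 0 \<and> (\<forall>i. coeff q i \<in> range of_nat) \<and> poly q x = 0)"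

definition is_alg_closure_of_Fp :: "'a::field itself \<Rightarrow> nat \<Rightarrow> bool" where
  "is_alg_closure_of_Fp _ p \<longleftrightarrow> prime p \<and> CHAR('a) = p \<and>
     (\<forall>q::'a poly. degree q > 0 \<longrightarrow> (\<exists>x. poly q x = 0)) \<and>
     (\<forall>x::'a. algebraic_over_prime_field x)"

end

theory Submission
  imports Defs "HOL-Computational_Algebra.Primes"
begin


lemma subfield_UNIV: "is_subfield (UNIV::'a::field set)"
  by (simp add: is_subfield_def)

lemma gen_field_subfield: "is_subfield (gen_field S)"
  unfolding gen_field_def is_subfield_def by blast

lemma gen_field_sub: "S \<subseteq> gen_field S"
  unfolding gen_field_def by blast

lemma gen_field_min: "is_subfield K \<Longrightarrow> S \<subseteq> K \<Longrightarrow> gen_field S \<subseteq> K"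
  unfolding gen_field_def by blast

lemma subfield_of_nat: "is_subfield K \<Longrightarrow> of_nat m \<in> K"
  by (induction m) (auto simp: is_subfield_def)

lemma subfield_mult_nat: "0 \<in> W \<Longrightarrow> (\<forall>x\<in>W. \<forall>y\<in>W. x + y \<in> W) \<Longrightarrow> v \<in> W \<Longrightarrow> of_nat m * v \<in> W"
  by (induction m) (auto simp: distrib_right)

lemma subfield_pow: "is_subfield K \<Longrightarrow> x \<in> K \<Longrightarrow> x ^ m \<in> K"
  by (induction m) (auto simp: is_subfield_def)

lemma fix_subfield:
  assumes "prime CHAR('a::field)" "n = CHAR('a) ^ e"
  shows "is_subfield {y::'a. y ^ n = y}"
proof -
  have add: "(x + y) ^ n = x ^ n + y ^ n" for x y :: 'a
    using freshmans_dream'[OF assms] .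
  have n0: "n > 0" using assms prime_gt_0_nat by simp
  have neg: "(- y) ^ n = - y" if "y ^ n = y" for y :: 'a
  proof -
    have "(- y) ^ n + y ^ n = (- y + y) ^ n" by (rule add[symmetric])
    also have "\<dots> = 0" using n0 by simp
    finally have "(- y) ^ n + y ^ n = 0" .
    hence "(- y) ^ n = - (y ^ n)" by (simp add: eq_neg_iff_add_eq_0)
    thus ?thesis using that by simp
  qed
  show ?thesis unfolding is_subfield_def
    using n0 add neg by (auto simp: power_mult_distrib power_inverse)
qed

lemma fin_field_pow:
  assumes "is_subfield F" "finite F" "y \<in> F"
  shows "y ^ card F = y"
proof (cases "y = 0")
  case True
  have "card F > 0" using assms card_gt_0_iff by blast
  thus ?thesis using True by simp
next
  case False
  have F0: "0 \<in> F" using assms(1) by (simp add: is_subfield_def)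
  have cF: "card F = Suc (card (F - {0}))"
    using assms F0 by (simp add: card_Diff_singleton) (metis Suc_pred card_gt_0_iff empty_iff)
  have "(\<Prod>z\<in>F-{0}. y * z) = (\<Prod>z\<in>F-{0}. z)"
  proof (rule prod.reindex_bij_witness[of _ "\<lambda>z. z / y" "\<lambda>z. y * z"])
    fix z assume "z \<in> F - {0}"
    thus "z / y \<in> F - {0}" using assms(1) assms(3) False
      by (auto simp: is_subfield_def divide_inverse)
  next
    fix z assume "z \<in> F - {0}"
    thus "y * z \<in> F - {0}" using assms(1) assms(3) False
      by (auto simp: is_subfield_def)
  qed (use False in auto)
  moreover have "(\<Prod>z\<in>F-{0}. y * z) = y ^ card (F - {0}) * (\<Prod>z\<in>F-{0}. z)"
    by (simp add: prod.distrib)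
  moreover have "(\<Prod>z\<in>F-{0}. z) \<noteq> 0" using assms(2) by simp
  ultimately have "y ^ card (F - {0}) = 1" by simp
  thus ?thesis using cF by simp
qed

lemma rts_finite_card:
  assumes "n \<ge> 2"
  shows "finite {y::'a::field. y ^ n = y} \<and> card {y::'a. y ^ n = y} \<le> n"
proof -
  define q :: "'a poly" where "q = monom 1 n - [:0,1:]"
  have ev: "poly q y = 0 \<longleftrightarrow> y ^ n = y" for y
    by (simp add: q_def poly_monom)
  have "coeff q n = 1" using assms by (simp add: q_def coeff_pCons split: nat.split)
  hence q0: "q \<noteq> 0" by auto
  have "degree q \<le> n" unfolding q_def
    by (rule order.trans[OF degree_diff_le_max]) (use assms in \<open>auto simp: degree_monom_eq\<close>)
  moreover have "card {y. poly q y = 0} \<le> degree q" by (rule card_poly_roots_bound[OF q0])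
  moreover have "finite {y. poly q y = 0}" by (rule poly_roots_finite[OF q0])
  ultimately show ?thesis using ev by simp
qed




lemma of_nat_pow_char:
  assumes "prime CHAR('a::field)"
  shows "(of_nat m :: 'a) ^ CHAR('a) = of_nat m"
proof (induction m)
  case 0 thus ?case using assms prime_gt_0_nat by simp
next
  case (Suc m)
  have "(1 + of_nat m :: 'a) ^ CHAR('a) = 1 ^ CHAR('a) + of_nat m ^ CHAR('a)"
    by (rule freshmans_dream[OF assms refl])
  thus ?case using Suc by simp
qed

lemma nat_inv_char:
  assumes "prime CHAR('a::field)" "(of_nat c :: 'a) \<noteq> 0"
  shows "of_nat (c ^ (CHAR('a) - 2)) * (of_nat c :: 'a) = 1"
proof -
  let ?p = "CHAR('a)"
  have p2: "?p \<ge> 2" using assms prime_ge_2_nat by blast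
  have "(of_nat c :: 'a) ^ Suc (Suc (?p - 2)) = of_nat c"
    using of_nat_pow_char[OF assms(1), of c] p2 by (simp add: Suc_diff_Suc numeral_2_eq_2)
  hence "(of_nat c :: 'a) * (of_nat c ^ (?p - 2) * of_nat c) = of_nat c * 1"
    by (simp add: mult_ac)
  hence "(of_nat c ^ (?p - 2) * of_nat c :: 'a) = 1" using assms(2) by simp
  thus ?thesis by simp
qed

lemma of_nat_mod_char: "(of_nat (x mod CHAR('a)) :: 'a::semiring_1) = of_nat x"
proof -
  have "x = x mod CHAR('a) + CHAR('a) * (x div CHAR('a))" by simp
  hence "(of_nat x :: 'a) = of_nat (x mod CHAR('a) + CHAR('a) * (x div CHAR('a)))"
    by metis
  also have "\<dots> = of_nat (x mod CHAR('a)) + of_nat CHAR('a) * of_nat (x div CHAR('a))"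
    by (simp only: of_nat_add of_nat_mult)
  also have "\<dots> = of_nat (x mod CHAR('a))" by simp
  finally show ?thesis by simp
qed

lemma pcard_aux:
  assumes p: "prime CHAR('a::field)" and V: "0 \<in> (V::'a set)" "\<forall>x\<in>V. \<forall>y\<in>V. x + y \<in> V"
    and ab: "a \<in> V" "b \<in> V" and ij: "i < j" "j < CHAR('a)"
    and eq: "a + of_nat i * v = b + of_nat j * v"
  shows "v \<in> V"
proof -
  let ?p = "CHAR('a)"
  have p2: "?p \<ge> 2" using p prime_ge_2_nat by blast
  have negb: "of_nat (?p - 1) * b = - b"
  proof -
    have "(of_nat (?p - 1) + 1) * b = (of_nat ?p :: 'a) * b"
      using p2 by (simp add: of_nat_diff)
    also have "\<dots> = 0" by simp
    finally show ?thesis by (simp add: distrib_right eq_neg_iff_add_eq_0)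
  qed
  have "of_nat (?p - 1) * b \<in> V" by (rule subfield_mult_nat[OF V ab(2)])
  hence amb: "a - b \<in> V" using V ab negb by (metis diff_conv_add_uminus)
  have cv: "of_nat (j - i) * v = a - b"
  proof -
    have "of_nat (j - i) * v = of_nat j * v - of_nat i * v"
      using ij by (simp add: of_nat_diff left_diff_distrib)
    moreover have "a - b = (a + of_nat i * v) - (b + of_nat i * v)" by simp
    moreover have "\<dots> = (b + of_nat j * v) - (b + of_nat i * v)" using eq by simp
    moreover have "\<dots> = of_nat j * v - of_nat i * v" by simp
    ultimately show ?thesis by simp
  qed
  have c0: "(of_nat (j - i) :: 'a) \<noteq> 0"
  proof -
    have "0 < j - i" "j - i < ?p" using ij by auto
    hence "\<not> ?p dvd (j - i)" using dvd_imp_le by (metis not_less)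
    thus ?thesis using of_nat_eq_0_iff_char_dvd by blast
  qed
  have "of_nat ((j - i) ^ (?p - 2)) * (of_nat (j - i) * v) \<in> V"
    using subfield_mult_nat[OF V amb, of "(j - i) ^ (?p - 2)"] cv by simp
  moreover have "of_nat ((j - i) ^ (?p - 2)) * (of_nat (j - i) * v) = v"
    using nat_inv_char[OF p c0] by (simp flip: mult.assoc)
  ultimately show ?thesis by metis
qed

lemma pcard:
  assumes p: "prime CHAR('a::field)" and W: "finite W" "0 \<in> (W::'a set)" "\<forall>x\<in>W. \<forall>y\<in>W. x + y \<in> W"
  shows "\<exists>e. card W = CHAR('a) ^ e"
proof -
  let ?p = "CHAR('a)"
  have p2: "?p \<ge> 2" using p prime_ge_2_nat by blast
  have key: "V \<subseteq> W \<Longrightarrow> 0 \<in> V \<Longrightarrow> (\<forall>x\<in>V. \<forall>y\<in>V. x + y \<in> V) \<Longrightarrow> card V = ?p ^ a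
     \<Longrightarrow> \<exists>e. card W = ?p ^ e" for V a
  proof (induction "card W - card V" arbitrary: V a rule: less_induct)
    case (less V a)
    show ?case
    proof (cases "V = W")
      case True thus ?thesis using less by blast
    next
      case False
      then obtain v where v: "v \<in> W" "v \<notin> V" using less.prems(1) by blast
      have finV: "finite V" using less.prems(1) W(1) finite_subset by blast
      define f where "f = (\<lambda>i a. a + of_nat i * v)"
      define V' where "V' = (\<Union>i\<in>{..<?p}. f i ` V)"
      have V'W: "V' \<subseteq> W"
        unfolding V'_def f_def using less.prems(1) W v subfield_mult_nat[OF W(2) W(3) v(1)] by blast
      have V'0: "0 \<in> V'"
      proof -
        have "f 0 0 = 0" by (simp add: f_def)
        hence "0 \<in> f 0 ` V" using less.prems(2) by (metis image_eqI)
        thus ?thesis unfolding V'_def using p2 by auto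
      qed
      have V'add: "\<forall>x\<in>V'. \<forall>y\<in>V'. x + y \<in> V'"
      proof (intro ballI)
        fix x y assume "x \<in> V'" "y \<in> V'"
        then obtain i j a b where "i < ?p" "j < ?p" "a \<in> V" "b \<in> V" "x = a + of_nat i * v" "y = b + of_nat j * v"
          unfolding V'_def f_def by blast
        hence "x + y = (a + b) + of_nat ((i + j) mod ?p) * v"
          by (simp add: of_nat_mod_char algebra_simps)
        moreover have "(i + j) mod ?p < ?p" using p2 by simp
        moreover have "a + b \<in> V" using less.prems(3) \<open>a \<in> V\<close> \<open>b \<in> V\<close> by blast
        ultimately show "x + y \<in> V'" unfolding V'_def f_def by blast
      qed
      have disj: "f i ` V \<inter> f j ` V = {}" if "i < ?p" "j < ?p" "i \<noteq> j" for i j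
      proof (rule ccontr)
        assume "f i ` V \<inter> f j ` V \<noteq> {}"
        then obtain a b where ab: "a \<in> V" "b \<in> V" "a + of_nat i * v = b + of_nat j * v"
          unfolding f_def by force
        show False
        proof (cases "i < j")
          case True thus False using pcard_aux[OF p less.prems(2,3) ab(1,2) True that(2) ab(3)] v by blast
        next
          case False hence "j < i" using that by simp
          thus False using pcard_aux[OF p less.prems(2,3) ab(2,1) _ that(1) ab(3)[symmetric]] v by blast
        qed
      qed
      have cardV': "card V' = ?p * card V"
      proof -
        have "card V' = (\<Sum>i\<in>{..<?p}. card (f i ` V))"
          unfolding V'_def using finV disj by (intro card_UN_disjoint) auto
        also have "\<dots> = (\<Sum>i\<in>{..<?p}. card V)"
          by (intro sum.cong refl card_image) (auto simp: f_def inj_on_def)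
        finally show ?thesis by simp
      qed
      have cV: "card V > 0" using less.prems(2) finV card_gt_0_iff by blast
      have "card V' \<le> card W" using V'W W(1) card_mono by blast
      moreover have "card V < card V'" using cardV' cV p2 by simp
      ultimately have "card W - card V' < card W - card V" by simp
      moreover have "card V' = ?p ^ Suc a" using cardV' less.prems(4) by simp
      ultimately show ?thesis using less.hyps V'W V'0 V'add by blast
    qed
  qed
  show ?thesis by (rule key[of "{0}" 0]) (use W in auto)
qed




lemma frob_inj:
  assumes p: "prime CHAR('a::field)" and n: "n = CHAR('a) ^ e" and eq: "(y::'a) ^ n = z ^ n"
  shows "y = z"
proof -
  have "y ^ n = ((y - z) + z) ^ n" by simp
  also have "\<dots> = (y - z) ^ n + z ^ n" by (rule freshmans_dream'[OF p n])
  finally have "(y - z) ^ n = 0" using eq by simp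
  thus ?thesis by simp
qed

lemma poly_frob:
  assumes p: "prime CHAR('a::field)" and c: "\<forall>i. coeff q i \<in> range of_nat"
  shows "poly q ((y::'a) ^ CHAR('a)) = (poly q y) ^ CHAR('a)"
proof -
  have "(poly q y) ^ CHAR('a) = (\<Sum>i\<le>degree q. (coeff q i * y ^ i) ^ CHAR('a))"
    by (simp add: poly_altdef freshmans_dream_sum[OF p refl])
  also have "\<dots> = (\<Sum>i\<le>degree q. coeff q i * (y ^ CHAR('a)) ^ i)"
  proof (intro sum.cong refl)
    fix i
    obtain m where "coeff q i = of_nat m" using c by blast
    hence "coeff q i ^ CHAR('a) = coeff q i" using of_nat_pow_char[OF p] by simp
    thus "(coeff q i * y ^ i) ^ CHAR('a) = coeff q i * (y ^ CHAR('a)) ^ i"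
      by (simp add: power_mult_distrib flip: power_mult) (simp add: mult.commute)
  qed
  finally show ?thesis by (simp add: poly_altdef)
qed

lemma alg_periodic:
  assumes p: "prime CHAR('a::field)" and alg: "algebraic_over_prime_field (x::'a)"
  shows "\<exists>e>0. x ^ (CHAR('a) ^ e) = x"
proof -
  let ?p = "CHAR('a)"
  obtain q :: "'a poly" where q: "q \<noteq> 0" "\<forall>i. coeff q i \<in> range of_nat" "poly q x = 0"
    using alg unfolding algebraic_over_prime_field_def by blast
  have roots: "poly q (x ^ (?p ^ j)) = 0" for j
  proof (induction j)
    case 0 thus ?case using q by simp
  next
    case (Suc j)
    have "x ^ (?p ^ Suc j) = (x ^ (?p ^ j)) ^ ?p" by (simp only: power_Suc2 power_mult)
    thus ?case using poly_frob[OF p q(2), of "x ^ (?p ^ j)"] Suc p prime_gt_0_nat by simp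
  qed
  define f where "f = (\<lambda>j::nat. x ^ (?p ^ j))"
  have "f ` UNIV \<subseteq> {y. poly q y = 0}" using roots f_def by auto
  hence "finite (f ` UNIV)" using poly_roots_finite[OF q(1)] finite_subset by blast
  hence "\<not> inj f" using finite_imageD infinite_UNIV_nat by blast
  then obtain i j where ij: "i \<noteq> j" "f i = f j" unfolding inj_def by blast
  have main: "\<exists>e>0. x ^ (?p ^ e) = x" if "i < j" "f i = f j" for i j
  proof -
    have "f j = (x ^ (?p ^ (j - i))) ^ (?p ^ i)"
      using that by (simp add: f_def flip: power_mult power_add)
    hence "(x ^ (?p ^ (j - i))) ^ (?p ^ i) = x ^ (?p ^ i)" using that f_def by simp
    hence "x ^ (?p ^ (j - i)) = x" by (rule frob_inj[OF p refl])
    thus ?thesis using that by (intro exI[of _ "j - i"]) auto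
  qed
  show ?thesis
  proof (cases "i < j")
    case True thus ?thesis using main ij by blast
  next
    case False hence "j < i" using ij by simp
    thus ?thesis using main ij by metis
  qed
qed

lemma gen_finite:
  assumes p: "prime CHAR('a::field)" and alg: "algebraic_over_prime_field (x::'a)"
  shows "finite (gen_field {x})"
proof -
  obtain e where e: "e > 0" "x ^ (CHAR('a) ^ e) = x" using alg_periodic[OF p alg] by blast
  have "CHAR('a) ^ e \<ge> 2"
    using e p prime_ge_2_nat by (metis One_nat_def dual_order.trans less_one not_less one_less_power self_le_power Suc_leI numeral_2_eq_2)
  hence "finite {y::'a. y ^ (CHAR('a) ^ e) = y}" using rts_finite_card by blast
  moreover have "gen_field {x} \<subseteq> {y::'a. y ^ (CHAR('a) ^ e) = y}"
    by (rule gen_field_min[OF fix_subfield[OF p refl]]) (use e in auto)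
  ultimately show ?thesis using finite_subset by blast
qed




lemma coeff1_lin_pow: "coeff ([:b, a:] ^ N) 1 = of_nat N * b ^ (N - 1) * (a::'a::comm_ring_1)"
proof (induction N)
  case 0 thus ?case by simp
next
  case (Suc N)
  have "[:b, a:] ^ Suc N = smult b ([:b, a:] ^ N) + pCons 0 (smult a ([:b, a:] ^ N))"
    by (simp add: mult_pCons_left)
  hence "coeff ([:b, a:] ^ Suc N) 1 = b * coeff ([:b, a:] ^ N) 1 + a * coeff ([:b, a:] ^ N) 0"
    by (simp add: coeff_pCons)
  also have "\<dots> = b * (of_nat N * b ^ (N - 1) * a) + a * b ^ N"
    using Suc by (simp add: coeff_0_power)
  also have "\<dots> = of_nat (Suc N) * b ^ N * a"
  proof (cases N)
    case 0 thus ?thesis by simp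
  next
    case (Suc m) thus ?thesis by (simp add: algebra_simps)
  qed
  finally show ?case by simp
qed

lemma coeff0_lin_pow: "coeff ([:b, a:] ^ N) 0 = (b::'a::comm_ring_1) ^ N"
  by (simp add: coeff_0_power)

lemma degree_lin_pow_le: "degree ([:b, a:] ^ N) \<le> N"
proof -
  have "degree ([:b, a:] ^ N) \<le> degree [:b, a:] * N" by (rule degree_power_le)
  also have "\<dots> \<le> N" by simp
  finally show ?thesis .
qed

lemma preimage_bound:
  assumes "(a::'a::field) \<noteq> 0" "N \<ge> 1"
  shows "finite {l. (b + a * l) ^ N = v} \<and> card {l. (b + a * l) ^ N = v} \<le> N"
proof -
  define q where "q = [:b, a:] ^ N + [:-v:]"
  have dg: "degree ([:b, a:] ^ N) = N" using assms by (simp add: degree_power_eq)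
  hence dq: "degree q = N" using assms unfolding q_def by (subst degree_add_eq_left) auto
  hence q0: "q \<noteq> 0" using assms by auto
  have ev: "poly q l = 0 \<longleftrightarrow> (b + a * l) ^ N = v" for l by (simp add: q_def add_eq_0_iff2 eq_neg_iff_add_eq_0 mult.commute)
  show ?thesis using poly_roots_finite[OF q0] card_poly_roots_bound[OF q0] dq ev by simp
qed

lemma geom_aux: "(p::nat) * (\<Sum>e\<in>{1..<Suc d}. p ^ e) + p = p ^ Suc d + (\<Sum>e\<in>{1..<Suc d}. p ^ e)"
  by (induction d) (simp_all add: algebra_simps)

lemma geom_sum_nat:
  assumes "d \<ge> 1" "p \<ge> 1"
  shows "((p::nat) - 1) * (\<Sum>e\<in>{1..<d}. p ^ e) + p = p ^ d"
proof -
  obtain d' where d: "d = Suc d'" using assms by (cases d) auto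
  have h: "p * (\<Sum>e\<in>{1..<d}. p ^ e) + p = p ^ d + (\<Sum>e\<in>{1..<d}. p ^ e)"
    using geom_aux[of p d'] d by simp
  have "(p - 1) * (\<Sum>e\<in>{1..<d}. p ^ e) = p * (\<Sum>e\<in>{1..<d}. p ^ e) - (\<Sum>e\<in>{1..<d}. p ^ e)"
    by (simp add: diff_mult_distrib)
  moreover have "(\<Sum>e\<in>{1..<d}. p ^ e) \<le> p * (\<Sum>e\<in>{1..<d}. p ^ e)" using assms(2) by simp
  ultimately show ?thesis using h by linarith
qed




theorem mainTheorem19:
  fixes p k N :: nat and \<alpha> \<beta> :: "'a::field"
  assumes "is_alg_closure_of_Fp TYPE('a) p"
    and "\<alpha> \<noteq> 0"
    and "k < N" and "N < p"
  shows "(\<exists>c\<in>gen_field {\<alpha> ^ N}.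
            card (gen_field {(\<beta> + c * \<alpha> ^ k) ^ N}) \<ge> card (gen_field {\<alpha> ^ N}))
       \<and> (gen_field {\<alpha> ^ N} \<noteq> gen_field {\<alpha> ^ N, \<beta> ^ N, \<alpha> ^ k * \<beta> ^ (N - 1)} \<longrightarrow>
          (\<exists>c\<in>gen_field {\<alpha> ^ N}.
            card (gen_field {(\<beta> + c * \<alpha> ^ k) ^ N}) > card (gen_field {\<alpha> ^ N})))"
proof -
  have pp: "prime p" and cp: "CHAR('a) = p" and alg: "\<And>x::'a. algebraic_over_prime_field x"
    using assms(1) unfolding is_alg_closure_of_Fp_def by auto
  have P: "prime CHAR('a)" using pp cp by simp
  have p2: "p \<ge> 2" using pp prime_ge_2_nat by blast
  have gen: "finite (gen_field {x}) \<and> (\<exists>e. card (gen_field {x}) = p ^ e) \<and> x ^ card (gen_field {x}) = x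
             \<and> card (gen_field {x}) \<ge> 2" for x :: 'a
  proof -
    have f: "finite (gen_field {x})" using gen_finite[OF P alg] .
    have sf: "is_subfield (gen_field {x})" by (rule gen_field_subfield)
    have e: "\<exists>e. card (gen_field {x}) = p ^ e"
      using pcard[OF P f] sf cp unfolding is_subfield_def by auto
    have "x \<in> gen_field {x}" using gen_field_sub by blast
    hence pw: "x ^ card (gen_field {x}) = x" using fin_field_pow[OF sf f] by blast
    have "{0, 1} \<subseteq> gen_field {x}" using sf unfolding is_subfield_def by auto
    hence "card {0::'a, 1} \<le> card (gen_field {x})" using f card_mono by blast
    thus ?thesis using f e pw by simp
  qed
  define K where "K = gen_field {\<alpha> ^ N}"
  define n where "n = card K"
  have Kf: "finite K" and Ksf: "is_subfield K" using gen K_def gen_field_subfield by auto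
  obtain d where nd: "n = p ^ d" using gen n_def K_def by blast
  have n2: "n \<ge> 2" using gen n_def K_def by blast
  have d1: "d \<ge> 1" using n2 nd by (cases d) auto
  have KR: "K = {y. y ^ n = y}"
  proof -
    have "K \<subseteq> {y. y ^ n = y}" using fin_field_pow[OF Ksf Kf] n_def by blast
    moreover have "finite {y::'a. y ^ n = y}" "card {y::'a. y ^ n = y} \<le> card K"
      using rts_finite_card[OF n2] n_def by auto
    ultimately show ?thesis using card_seteq by blast
  qed
  define S where "S = {x::'a. card (gen_field {x}) < n}"
  have S_sub: "S \<subseteq> (\<Union>e\<in>{1..<d}. {y::'a. y ^ (p ^ e) = y})"
  proof
    fix x assume "x \<in> S"
    hence lt: "card (gen_field {x}) < n" using S_def by simp
    obtain e where e: "card (gen_field {x}) = p ^ e" using gen by blast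
    have "e \<ge> 1" using gen[of x] e by (cases e) auto
    moreover have "e < d" using lt e nd p2 power_less_imp_less_exp[of p e d] by simp
    moreover have "x ^ (p ^ e) = x" using gen[of x] e by simp
    ultimately show "x \<in> (\<Union>e\<in>{1..<d}. {y::'a. y ^ (p ^ e) = y})" by auto
  qed
  have rts_e: "finite {y::'a. y ^ (p ^ e) = y} \<and> card {y::'a. y ^ (p ^ e) = y} \<le> p ^ e" if "e \<ge> 1" for e
  proof -
    have "p ^ e \<ge> p ^ 1" using that p2 by (intro power_increasing) auto
    thus ?thesis using rts_finite_card[of "p ^ e"] p2 by simp
  qed
  have finU: "finite (\<Union>e\<in>{1..<d}. {y::'a. y ^ (p ^ e) = y})" using rts_e by auto
  have Sf: "finite S" using S_sub finU finite_subset by blast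
  have cardS: "card S \<le> (\<Sum>e\<in>{1..<d}. p ^ e)"
  proof -
    have "card S \<le> card (\<Union>e\<in>{1..<d}. {y::'a. y ^ (p ^ e) = y})" using S_sub finU card_mono by blast
    also have "\<dots> \<le> (\<Sum>e\<in>{1..<d}. card {y::'a. y ^ (p ^ e) = y})" by (rule card_UN_le) simp
    also have "\<dots> \<le> (\<Sum>e\<in>{1..<d}. p ^ e)" using rts_e by (intro sum_mono) auto
    finally show ?thesis .
  qed
  define g where "g = (\<lambda>c. (\<beta> + c * \<alpha> ^ k) ^ N)"
  have ak0: "\<alpha> ^ k \<noteq> 0" using assms(2) by simp
  have N1: "N \<ge> 1" using assms(3) by simp
  have pre: "finite {c. g c = v} \<and> card {c. g c = v} \<le> N" for v
    using preimage_bound[OF ak0 N1, of \<beta> v] by (simp add: g_def mult.commute)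
  define B where "B = {c\<in>K. g c \<in> S}"
  have BK: "B \<subseteq> K" using B_def by auto
  have cardB: "card B \<le> N * card S"
  proof -
    have "B \<subseteq> (\<Union>v\<in>S. {c. g c = v})" using B_def by auto
    hence "card B \<le> card (\<Union>v\<in>S. {c. g c = v})" using Sf pre by (intro card_mono) auto
    also have "\<dots> \<le> (\<Sum>v\<in>S. card {c. g c = v})" by (rule card_UN_le[OF Sf])
    also have "\<dots> \<le> (\<Sum>v\<in>S. N)" using pre by (intro sum_mono) auto
    finally show ?thesis by (simp add: mult.commute)
  qed
  define G where "G = K - B"
  have cardG: "card G \<ge> p"
  proof -
    have "N * card S \<le> (p - 1) * card S" using assms(4) by (intro mult_right_mono) auto
    also have "\<dots> \<le> (p - 1) * (\<Sum>e\<in>{1..<d}. p ^ e)" using cardS by simp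
    finally have "card B + p \<le> n" using cardB geom_sum_nat[OF d1, of p] p2 nd by linarith
    moreover have "card G = card K - card B" unfolding G_def using BK Kf card_Diff_subset finite_subset by metis
    ultimately show ?thesis using n_def by linarith
  qed
  have Gchar: "c \<in> K \<and> \<not> card (gen_field {g c}) < n" if "c \<in> G" for c
    using that G_def B_def S_def by auto
  have part1: "\<exists>c\<in>K. card (gen_field {g c}) \<ge> n"
  proof -
    have "G \<noteq> {}" using cardG p2 by auto
    then obtain c where "c \<in> G" by blast
    thus ?thesis using Gchar by (meson not_le)
  qed
  have part2: "\<exists>c\<in>K. card (gen_field {g c}) > n"
    if neq: "K \<noteq> gen_field {\<alpha> ^ N, \<beta> ^ N, \<alpha> ^ k * \<beta> ^ (N - 1)}"
  proof (rule ccontr)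
    assume H: "\<not> (\<exists>c\<in>K. card (gen_field {g c}) > n)"
    have gK: "g c \<in> K" if "c \<in> G" for c
    proof -
      have "card (gen_field {g c}) = n" using H Gchar[OF that] by (meson not_le antisym)
      hence "(g c) ^ n = g c" using gen[of "g c"] by simp
      thus ?thesis using KR by simp
    qed
    define g1 where "g1 = [:\<beta>, \<alpha> ^ k:] ^ N"
    define h1 where "h1 = [:\<beta> ^ n, (\<alpha> ^ k) ^ n:] ^ N"
    have frob: "(x + y) ^ n = x ^ n + y ^ n" for x y :: 'a
      using freshmans_dream'[OF P, of n d] nd cp by simp
    have "poly h1 c = poly g1 c" if "c \<in> G" for c
    proof -
      have cK: "c \<in> K" using that G_def by auto
      hence cn: "c ^ n = c" using KR by auto
      have "poly h1 c = (\<beta> ^ n + (\<alpha> ^ k) ^ n * c) ^ N" by (simp add: h1_def mult.commute)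
      also have "\<dots> = ((\<beta> + \<alpha> ^ k * c) ^ n) ^ N" using cn frob by (simp add: power_mult_distrib)
      also have "\<dots> = (g c) ^ n" by (simp add: g_def mult.commute flip: power_mult)
      also have "\<dots> = g c" using gK[OF that] KR by auto
      also have "\<dots> = poly g1 c" by (simp add: g_def g1_def mult.commute)
      finally show ?thesis .
    qed
    moreover have "card G > degree h1" "card G > degree g1"
      using degree_lin_pow_le[of "\<beta> ^ n" "(\<alpha> ^ k) ^ n" N] degree_lin_pow_le[of \<beta> "\<alpha> ^ k" N]
        cardG assms(4) unfolding h1_def g1_def by linarith+
    ultimately have hg: "h1 = g1" by (rule poly_eqI_degree)
    have "coeff h1 0 = coeff g1 0" using hg by simp
    hence "(\<beta> ^ N) ^ n = \<beta> ^ N" unfolding h1_def g1_def coeff0_lin_pow by (simp flip: power_mult) (simp add: mult.commute)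
    hence bK: "\<beta> ^ N \<in> K" using KR by simp
    have "coeff h1 1 = coeff g1 1" using hg by simp
    hence c1: "of_nat N * ((\<beta> ^ n) ^ (N - 1) * (\<alpha> ^ k) ^ n) = of_nat N * (\<beta> ^ (N - 1) * \<alpha> ^ k)"
      unfolding h1_def g1_def coeff1_lin_pow by (simp add: mult.assoc)
    have "\<not> CHAR('a) dvd N" using cp assms(4) N1 by (auto dest: dvd_imp_le)
    hence "(of_nat N :: 'a) \<noteq> 0" using of_nat_eq_0_iff_char_dvd by blast
    hence "(\<beta> ^ n) ^ (N - 1) * (\<alpha> ^ k) ^ n = \<beta> ^ (N - 1) * \<alpha> ^ k" using c1 by simp
    hence "(\<alpha> ^ k * \<beta> ^ (N - 1)) ^ n = \<alpha> ^ k * \<beta> ^ (N - 1)"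
      by (simp add: power_mult_distrib mult.commute flip: power_mult)
    hence wK: "\<alpha> ^ k * \<beta> ^ (N - 1) \<in> K" using KR by simp
    have aK: "\<alpha> ^ N \<in> K" using K_def gen_field_sub by blast
    have "gen_field {\<alpha> ^ N, \<beta> ^ N, \<alpha> ^ k * \<beta> ^ (N - 1)} \<subseteq> K"
      using aK bK wK by (intro gen_field_min[OF Ksf]) auto
    moreover have "K \<subseteq> gen_field {\<alpha> ^ N, \<beta> ^ N, \<alpha> ^ k * \<beta> ^ (N - 1)}"
      unfolding K_def using gen_field_sub[of "{\<alpha> ^ N, \<beta> ^ N, \<alpha> ^ k * \<beta> ^ (N - 1)}"]
      by (intro gen_field_min[OF gen_field_subfield]) auto
    ultimately show False using neq by blast
  qed
  show ?thesis using part1 part2 unfolding K_def n_def g_def by blast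
qed


end
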